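(* Let $\varepsilon=(\varepsilon_n)_{n\in\mathbb{Z}}$ be i.i.d. with $\mathbb{P}(\varepsilon_n=1)=\mathbb{P}(\varepsilon_n=-1)=1/2$, let $a_0,a_1\in\mathbb{R}$, and let $\omega_n=a_0\varepsilon_n+a_1\varepsilon_{n-1}$. Write $\omega_n=f(X_n)$ with $X_n=(\varepsilon_{n-1},\varepsilon_n)$, a Markov chain on $\Sigma=\{-1,+1\}^2$ started at its invariant (uniform) distribution, and $f(x_0,x_1)=a_0x_1+a_1x_0$. Then the Perron–Frobenius eigenvalue of the matrix $A(0,\beta,0)=\sum_{t\ge1}M(t,\beta,0)$ is $$\lambda(\beta)=\cosh(a_0\beta)\cosh(a_1\beta)\left(1+K(1)\left(\frac{\cosh((a_0+a_1)\beta)}{\cosh(a_0\beta)\cosh(a_1\beta)}-1\right)\right),$$ so that the annealed critical point of the pinning model with this disorder is $h_c^a(\beta)=-\log\lambda(\beta)$.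
   Context: $K(n)$, $n\ge1$, is a probability distribution on $\{1,2,\dots\}$ with $K(n)>0$ for all $n$ (the interarrival law of a recurrent renewal process $\tau$ with $\tau_0=0$). For a Markov chain with transition matrix $Q$ on finite $\Sigma$ and $f:\Sigma\to\mathbb{R}$, $M(t,\beta,h)(x,y)=K(t)Q^t(x,y)e^{\beta f(y)+h}$. The annealed critical point is $h_c^a(\beta)=\sup\{h: \lim_N \frac1N\log\mathbb{E}Z_{N,\beta,h,\omega}=0\}$, where $Z_{N,\beta,h,\omega}=E\big[\exp\big(\sum_{n=1}^N(\beta\omega_n+h)\mathbf 1_{\{n\in\tau\}}\big)\mathbf 1_{\{N\in\tau\}}\big]$ and $\mathbb{E}$ averages over $\omega$. *)

theory Defs
  imports Complex_Main "HOL-Library.FuncSet"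
begin

text \<open>State space Sigma = {-1,+1}^2; a state (x0,x1) = (eps_(n-1), eps_n).\<close>
definition Sig :: "(int \<times> int) set" where
  "Sig = {-1, 1} \<times> {-1, 1}"

text \<open>Transition matrix of X_n = (eps_(n-1), eps_n): (x0,x1) -> (x1,y1), y1 uniform.\<close>
definition Qm :: "int \<times> int \<Rightarrow> int \<times> int \<Rightarrow> real" where
  "Qm x y = (if fst y = snd x then 1/2 else 0)"

fun matpow :: "(int \<times> int \<Rightarrow> int \<times> int \<Rightarrow> real) \<Rightarrow> nat \<Rightarrow> int \<times> int \<Rightarrow> int \<times> int \<Rightarrow> real" where
  "matpow P 0 x y = (if x = y then 1 else 0)"
| "matpow P (Suc n) x y = (\<Sum>z\<in>Sig. matpow P n x z * P z y)"

definition fobs :: "real \<Rightarrow> real \<Rightarrow> int \<times> int \<Rightarrow> real" where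
  "fobs a0 a1 x = a0 * real_of_int (snd x) + a1 * real_of_int (fst x)"

definition Mmat :: "(nat \<Rightarrow> real) \<Rightarrow> real \<Rightarrow> real \<Rightarrow> nat \<Rightarrow> real \<Rightarrow> real
    \<Rightarrow> int \<times> int \<Rightarrow> int \<times> int \<Rightarrow> real" where
  "Mmat K a0 a1 t \<beta> h x y = K t * matpow Qm t x y * exp (\<beta> * fobs a0 a1 y + h)"

definition Amat :: "(nat \<Rightarrow> real) \<Rightarrow> real \<Rightarrow> real \<Rightarrow> real \<Rightarrow> real
    \<Rightarrow> int \<times> int \<Rightarrow> int \<times> int \<Rightarrow> real" where
  "Amat K a0 a1 \<beta> h x y = (\<Sum>t. Mmat K a0 a1 (Suc t) \<beta> h x y)"

definition is_eigenvalue :: "(int \<times> int \<Rightarrow> int \<times> int \<Rightarrow> real) \<Rightarrow> complex \<Rightarrow> bool" where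
  "is_eigenvalue B \<mu> \<longleftrightarrow> (\<exists>v :: int \<times> int \<Rightarrow> complex. (\<exists>x\<in>Sig. v x \<noteq> 0) \<and>
      (\<forall>x\<in>Sig. (\<Sum>y\<in>Sig. complex_of_real (B x y) * v y) = \<mu> * v x))"

definition pf_eigenvalue :: "(int \<times> int \<Rightarrow> int \<times> int \<Rightarrow> real) \<Rightarrow> real \<Rightarrow> bool" where
  "pf_eigenvalue B r \<longleftrightarrow> is_eigenvalue B (complex_of_real r) \<and>
      (\<forall>\<mu>. is_eigenvalue B \<mu> \<longrightarrow> cmod \<mu> \<le> r)"

fun renw :: "(nat \<Rightarrow> real) \<Rightarrow> nat \<Rightarrow> nat list \<Rightarrow> real" where
  "renw K p [] = 1"
| "renw K p (t # ts) = K (t - p) * renw K t ts"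

definition omega :: "real \<Rightarrow> real \<Rightarrow> (nat \<Rightarrow> int) \<Rightarrow> nat \<Rightarrow> real" where
  "omega a0 a1 e n = a0 * real_of_int (e n) + a1 * real_of_int (e (n - 1))"

text \<open>Annealed partition function E Z_(N,beta,h,omega): the renewal expectation is written as a
  sum over the possible sets tau \<inter> {1..N} containing N, the disorder expectation as the uniform
  average over (eps_0,...,eps_N) \<in> {-1,1}^(N+1).\<close>
definition Zann :: "(nat \<Rightarrow> real) \<Rightarrow> real \<Rightarrow> real \<Rightarrow> nat \<Rightarrow> real \<Rightarrow> real \<Rightarrow> real" where
  "Zann K a0 a1 N \<beta> h =
     (\<Sum>S\<in>{S. S \<subseteq> {1..N} \<and> N \<in> S}.
        renw K 0 (sorted_list_of_set S) *
        ((\<Sum>e\<in>PiE {0..N} (\<lambda>_. {-1, 1::int}).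
            exp (\<Sum>n\<in>S. \<beta> * omega a0 a1 e n + h)) / 2 ^ (N + 1)))"

definition hca :: "(nat \<Rightarrow> real) \<Rightarrow> real \<Rightarrow> real \<Rightarrow> real \<Rightarrow> real" where
  "hca K a0 a1 \<beta> = Sup {h. (\<lambda>N. ln (Zann K a0 a1 N \<beta> h) / real N) \<longlonglongrightarrow> 0}"

end

theory Submission
  imports Defs
begin


function ren :: "(nat \<Rightarrow> real) \<Rightarrow> nat \<Rightarrow> real" where
  "ren kt n = (if n = 0 then 1 else (\<Sum>m<n. ren kt m * kt (n - m)))"
  by auto
termination by (relation "measure (\<lambda>(kt,n). n)") auto

declare ren.simps[simp del]

lemma ren_0[simp]: "ren kt 0 = 1" by (simp add: ren.simps)
lemma ren_pos_n: "n > 0 \<Longrightarrow> ren kt n = (\<Sum>m<n. ren kt m * kt (n - m))"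
  by (subst ren.simps) simp

lemma ren_nonneg:
  assumes "\<And>t. kt t \<ge> 0"
  shows "ren kt n \<ge> 0"
proof (induction n rule: less_induct)
  case (less n)
  then show ?case
    by (cases "n = 0") (auto simp: ren_pos_n intro!: sum_nonneg mult_nonneg_nonneg assms)
qed

lemma ren_supermult:
  assumes kt: "\<And>t. kt t \<ge> 0"
  shows "ren kt (a + b) \<ge> ren kt a * ren kt b"
proof (induction b rule: less_induct)
  case (less b)
  show ?case
  proof (cases "b = 0")
    case True then show ?thesis by simp
  next
    case False
    have "ren kt a * ren kt b = (\<Sum>j<b. ren kt a * ren kt j * kt (b - j))"
      using False by (simp add: ren_pos_n sum_distrib_left mult.assoc)
    also have "\<dots> \<le> (\<Sum>j<b. ren kt (a + j) * kt (b - j))"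
      by (intro sum_mono mult_right_mono less kt) auto
    also have "\<dots> = (\<Sum>m\<in>{a..<a+b}. ren kt m * kt (a + b - m))"
      by (rule sum.reindex_bij_witness[of _ "\<lambda>m. m - a" "\<lambda>j. a + j"]) auto
    also have "\<dots> \<le> (\<Sum>m<a+b. ren kt m * kt (a + b - m))"
      by (intro sum_mono2) (auto intro!: mult_nonneg_nonneg ren_nonneg kt)
    also have "\<dots> = ren kt (a + b)" using False by (simp add: ren_pos_n)
    finally show ?thesis .
  qed
qed

lemma ren_pow:
  assumes kt: "\<And>t. kt t \<ge> 0"
  shows "ren kt (k * n) \<ge> ren kt n ^ k"
proof (induction k)
  case 0 then show ?case by simp
next
  case (Suc k)
  have "ren kt n ^ Suc k = ren kt n * ren kt n ^ k" by simp
  also have "\<dots> \<le> ren kt n * ren kt (k * n)"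
    by (intro mult_left_mono Suc ren_nonneg kt)
  also have "\<dots> \<le> ren kt (n + k * n)" by (rule ren_supermult[OF kt])
  finally show ?case by (simp add: add.commute)
qed

lemma ren_1: "ren kt 1 = kt 1" by (simp add: ren_pos_n)

lemma ren_pos:
  assumes kt: "\<And>t. kt t \<ge> 0" and k1: "kt 1 > 0"
  shows "ren kt n > 0"
proof -
  have "ren kt (n * 1) \<ge> ren kt 1 ^ n" by (rule ren_pow[OF kt])
  moreover have "ren kt 1 ^ n > 0" using k1 by (simp add: ren_1 del: One_nat_def)
  ultimately show ?thesis by simp
qed

lemma ren_le1:
  assumes kt: "\<And>t. kt t \<ge> 0" and sk: "summable kt" and le: "suminf kt \<le> 1"
  shows "ren kt n \<le> 1"
proof (induction n rule: less_induct)
  case (less n)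
  show ?case
  proof (cases "n = 0")
    case True then show ?thesis by simp
  next
    case False
    have "ren kt n = (\<Sum>m<n. ren kt m * kt (n - m))" using False by (simp add: ren_pos_n)
    also have "\<dots> \<le> (\<Sum>m<n. kt (n - m))"
      by (intro sum_mono mult_left_le_one_le less ren_nonneg kt) auto
    also have "\<dots> \<le> (\<Sum>t<Suc n. kt t)"
    proof -
      have "(\<Sum>m<n. kt (n - m)) = (\<Sum>t\<in>{1..n}. kt t)"
        by (rule sum.reindex_bij_witness[of _ "\<lambda>t. n - t" "\<lambda>m. n - m"]) auto
      also have "\<dots> \<le> (\<Sum>t<Suc n. kt t)" by (intro sum_mono2) (auto intro: kt)
      finally show ?thesis .
    qed
    also have "\<dots> \<le> suminf kt" by (intro sum_le_suminf sk) (auto intro: kt)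
    finally show ?thesis using le by simp
  qed
qed

lemma ren_gen:
  assumes kt: "\<And>t. kt t \<ge> 0" and k0: "kt 0 = 0" and s: "s \<ge> 0"
    and su: "summable (\<lambda>n. ren kt n * s ^ n)" and sk: "summable (\<lambda>n. kt n * s ^ n)"
  shows "(\<Sum>n. ren kt n * s ^ n) = 1 + (\<Sum>n. kt n * s ^ n) * (\<Sum>n. ren kt n * s ^ n)"
proof -
  have nk: "summable (\<lambda>k. norm (kt k * s ^ k))" using sk kt s by simp
  have nu: "summable (\<lambda>k. norm (ren kt k * s ^ k))" using su ren_nonneg[OF kt] s by simp
  have c: "(\<lambda>k. \<Sum>i\<le>k. (kt i * s ^ i) * (ren kt (k - i) * s ^ (k - i))) sums
      ((\<Sum>n. kt n * s ^ n) * (\<Sum>n. ren kt n * s ^ n))"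
    by (rule Cauchy_product_sums[OF nk nu])
  have eq: "(\<Sum>i\<le>k. (kt i * s ^ i) * (ren kt (k - i) * s ^ (k - i)))
        = ren kt k * s ^ k - (if k = 0 then 1 else 0)" for k
  proof (cases "k = 0")
    case True then show ?thesis using k0 by simp
  next
    case False
    have "(\<Sum>i\<le>k. (kt i * s ^ i) * (ren kt (k - i) * s ^ (k - i)))
        = (\<Sum>i\<le>k. s ^ k * (kt i * ren kt (k - i)))"
      by (intro sum.cong refl) (simp add: power_add[symmetric] algebra_simps)
    also have "\<dots> = s ^ k * (\<Sum>i\<le>k. kt i * ren kt (k - i))" by (simp add: sum_distrib_left)
    also have "(\<Sum>i\<le>k. kt i * ren kt (k - i)) = (\<Sum>i\<in>{1..k}. kt i * ren kt (k - i))"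
      using k0 by (intro sum.mono_neutral_right) (auto simp: not_le)
    also have "\<dots> = (\<Sum>m<k. ren kt m * kt (k - m))"
      by (rule sum.reindex_bij_witness[of _ "\<lambda>m. k - m" "\<lambda>i. k - i"]) auto
    also have "\<dots> = ren kt k" using False by (simp add: ren_pos_n)
    finally show ?thesis using False by simp
  qed
  have c2: "(\<lambda>k. ren kt k * s ^ k - (if k = 0 then 1 else 0)) sums
      ((\<Sum>n. kt n * s ^ n) * (\<Sum>n. ren kt n * s ^ n))"
    using c eq by simp
  have c3: "(\<lambda>k. ren kt k * s ^ k - (if k = 0 then 1 else 0)) sums
      ((\<Sum>n. ren kt n * s ^ n) - 1)"
    using sums_diff[OF summable_sums[OF su] sums_single[of 0 "\<lambda>_. 1::real"]] by simp
  from sums_unique2[OF c2 c3] show ?thesis by simp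
qed

lemma ren_crit_exists:
  assumes kt: "\<And>t. kt t \<ge> 0" and k0: "kt 0 = 0" and ks: "kt sums 1" and e: "\<epsilon> > 0"
  shows "\<exists>k\<ge>1. ren kt k \<ge> exp (- \<epsilon> * k)"
proof (rule ccontr)
  assume "\<not> ?thesis"
  then have lt: "\<And>k. k \<ge> 1 \<Longrightarrow> ren kt k < exp (- \<epsilon> * k)" by force
  have le: "norm (ren kt k) \<le> exp (- \<epsilon>) ^ k" for k
  proof (cases "k = 0")
    case True then show ?thesis by simp
  next
    case False
    then have "ren kt k < exp (- \<epsilon> * k)" using lt by simp
    also have "\<dots> = exp (- \<epsilon>) ^ k" by (simp add: exp_of_nat_mult[symmetric] mult.commute)
    finally show ?thesis using ren_nonneg[of kt k, OF kt] by simp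
  qed
  have su: "summable (ren kt)"
    by (rule summable_comparison_test[OF _ summable_geometric[of "exp (- \<epsilon>)"]])
       (use le e in auto)
  have "(\<Sum>n. ren kt n * 1 ^ n) = 1 + (\<Sum>n. kt n * 1 ^ n) * (\<Sum>n. ren kt n * 1 ^ n)"
    by (rule ren_gen[of kt, OF kt k0]) (use su ks in \<open>auto simp: sums_iff\<close>)
  then show False using ks by (simp add: sums_iff)
qed

lemma ren_crit_lower:
  assumes kt: "\<And>t. kt t \<ge> 0" and k0: "kt 0 = 0" and k1: "kt 1 > 0" and ks: "kt sums 1"
    and e: "\<epsilon> > 0"
  shows "\<exists>N0. \<forall>n\<ge>N0. ln (ren kt n) \<ge> - 2 * \<epsilon> * n"
proof -
  obtain k where k: "k \<ge> 1" "ren kt k \<ge> exp (- \<epsilon> * k)"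
    using ren_crit_exists[OF kt k0 ks e] by blast
  define m where "m = Min (ren kt ` {..<k})"
  have mpos: "m > 0" unfolding m_def using k(1) ren_pos[of kt, OF kt k1]
    by (subst Min_gr_iff) (auto simp: lessThan_empty_iff)
  have mle: "r < k \<Longrightarrow> m \<le> ren kt r" for r unfolding m_def by simp
  have bound: "ren kt n \<ge> m * exp (- \<epsilon> * n)" for n
  proof -
    define q r where "q = n div k" and "r = n mod k"
    have n: "n = r + q * k" by (simp add: q_def r_def)
    have r: "r < k" using k(1) by (simp add: r_def)
    have "ren kt n \<ge> ren kt r * ren kt (q * k)" unfolding n by (rule ren_supermult[OF kt])
    moreover have "ren kt (q * k) \<ge> ren kt k ^ q" by (rule ren_pow[OF kt])
    moreover have "ren kt k ^ q \<ge> exp (- \<epsilon> * k) ^ q" by (intro power_mono k) simp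
    moreover have "exp (- \<epsilon> * k) ^ q = exp (- \<epsilon> * (q * k))"
      by (simp add: exp_of_nat_mult[symmetric] algebra_simps)
    moreover have "exp (- \<epsilon> * (q * k)) \<ge> exp (- \<epsilon> * n)"
      using e by (simp add: n mult_left_mono)
    moreover have "ren kt r \<ge> m" using mle r by simp
    ultimately have "ren kt n \<ge> m * exp (- \<epsilon> * (q * k))"
      by (smt (verit, best) mpos mult_mono ren_nonneg[OF kt] exp_gt_zero)
    moreover have "m * exp (- \<epsilon> * (q * k)) \<ge> m * exp (- \<epsilon> * n)"
      using e mpos by (intro mult_left_mono) (auto simp: n mult_left_mono)
    ultimately show ?thesis by linarith
  qed
  obtain N0 :: nat where N0: "N0 \<ge> - ln m / \<epsilon>" by (meson real_arch_simple)
  have "ln (ren kt n) \<ge> - 2 * \<epsilon> * n" if "n \<ge> N0" for n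
  proof -
    have "ln (ren kt n) \<ge> ln (m * exp (- \<epsilon> * n))"
      using bound[of n] mpos ren_pos[of kt n, OF kt k1] by (subst ln_le_cancel_iff) auto
    also have "ln (m * exp (- \<epsilon> * n)) = ln m - \<epsilon> * n" using mpos by (simp add: ln_mult)
    finally have a: "ln (ren kt n) \<ge> ln m - \<epsilon> * n" .
    have "real n \<ge> - ln m / \<epsilon>" using N0 that by linarith
    then have "\<epsilon> * n \<ge> - ln m" using e by (simp add: field_simps)
    then show ?thesis using a by linarith
  qed
  then show ?thesis by blast
qed

lemma ren_super:
  assumes kt: "\<And>t. kt t \<ge> 0" and k0: "kt 0 = 0" and sk: "summable kt" and gt: "suminf kt > 1"
  shows "\<exists>n. ren kt n > 1"
proof (rule ccontr)
  assume "\<not> ?thesis"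
  then have le1: "\<And>n. ren kt n \<le> 1" by (simp add: not_less)
  have "(\<lambda>n. \<Sum>t<n. kt t) \<longlonglongrightarrow> suminf kt" using sk by (simp add: summable_LIMSEQ)
  then obtain T where T: "(\<Sum>t<T. kt t) > 1"
    using gt order_tendstoD(1) eventually_sequentially by (metis order.refl)
  define p where "p = (\<Sum>t<T. kt t)"
  have T0: "T > 0" using T by (cases T) auto
  define s where "s = root T (1 / p)"
  have p1: "p > 1" using T p_def by simp
  have s0: "s > 0" unfolding s_def using p1 T0 by simp
  have s1: "s < 1" unfolding s_def using p1 T0 by (simp add: real_root_lt_1_iff)
  have sT: "s ^ T = 1 / p" unfolding s_def using p1 T0 by simp
  have sk2: "summable (\<lambda>n. kt n * s ^ n)"
  proof (rule summable_comparison_test[OF _ sk])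
    show "\<exists>N. \<forall>n\<ge>N. norm (kt n * s ^ n) \<le> kt n"
    proof (intro exI[of _ 0] allI impI)
      fix n :: nat
      have "kt n * s ^ n \<le> kt n"
      proof -
        have "s ^ n \<le> 1" using s0 s1 by (simp add: power_le_one)
        then show ?thesis using mult_left_le_one_le[of "kt n" "s ^ n"] kt[of n] s0 by (simp add: mult.commute)
      qed
      then show "norm (kt n * s ^ n) \<le> kt n" using kt[of n] s0 by (simp add: abs_mult)
    qed
  qed
  have su: "summable (\<lambda>n. ren kt n * s ^ n)"
    by (rule summable_comparison_test[OF _ summable_geometric[of s]])
       (use le1 s0 s1 ren_nonneg[OF kt] in \<open>auto intro!: exI[of _ 0] mult_left_le_one_le simp: abs_mult\<close>)
  have "(\<Sum>t<T. kt t * s ^ t) \<ge> (\<Sum>t<T. kt t * s ^ T)"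
    by (intro sum_mono mult_left_mono kt power_decreasing) (use s0 s1 in auto)
  also have "(\<Sum>t<T. kt t * s ^ T) = 1" using sT p1 by (simp add: sum_divide_distrib[symmetric] p_def[symmetric])
  finally have "(\<Sum>t<T. kt t * s ^ t) \<ge> 1" .
  also have "(\<Sum>t<T. kt t * s ^ t) \<le> (\<Sum>n. kt n * s ^ n)"
    by (intro sum_le_suminf sk2) (use kt s0 in auto)
  finally have K1: "(\<Sum>n. kt n * s ^ n) \<ge> 1" .
  have U0: "(\<Sum>n. ren kt n * s ^ n) \<ge> 0" 
    by (intro suminf_nonneg su) (use ren_nonneg[OF kt] s0 in auto)
  have "(\<Sum>n. ren kt n * s ^ n) = 1 + (\<Sum>n. kt n * s ^ n) * (\<Sum>n. ren kt n * s ^ n)"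
    by (rule ren_gen[of kt, OF kt k0 _ su sk2]) (use s0 in simp)
  moreover have "(\<Sum>n. kt n * s ^ n) * (\<Sum>n. ren kt n * s ^ n) \<ge> (\<Sum>n. ren kt n * s ^ n)"
    using K1 U0 by (metis mult_right_mono mult_1)
  ultimately show False by linarith
qed

lemma crit_limit:
  assumes kt: "\<And>t. kt t \<ge> 0" and k0: "kt 0 = 0" and k1: "kt 1 > 0" and ks: "kt sums 1"
    and r: "r > 0" and R: "R > 0"
    and bnd: "\<And>n. n \<ge> 1 \<Longrightarrow> r * ren kt n \<le> Z n \<and> Z n \<le> R * ren kt n"
  shows "(\<lambda>N. ln (Z N) / real N) \<longlonglongrightarrow> 0"
proof (rule LIMSEQ_I)
  fix e :: real assume e: "e > 0"
  obtain N1 where N1: "\<And>n. n \<ge> N1 \<Longrightarrow> ln (ren kt n) \<ge> - 2 * (e / 4) * n"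
    using ren_crit_lower[OF kt k0 k1 ks, of "e/4"] e by auto
  obtain N2 :: nat where N2: "N2 \<ge> 2 * \<bar>ln r\<bar> / e + \<bar>ln R\<bar> / e + 1" by (meson real_arch_simple)
  have sk: "summable kt" "suminf kt = 1" using ks by (auto simp: sums_iff)
  show "\<exists>no. \<forall>n\<ge>no. norm (ln (Z n) / real n - 0) < e"
  proof (intro exI[of _ "max N1 (max N2 1)"] allI impI)
    fix n assume n: "max N1 (max N2 1) \<le> n"
    then have n1: "n \<ge> 1" "n \<ge> N1" "real n \<ge> N2" by auto
    have rp: "ren kt n > 0" by (rule ren_pos[of kt n, OF kt k1])
    have r1: "ren kt n \<le> 1" by (rule ren_le1[of kt, OF kt sk(1)]) (simp add: sk(2))
    have b: "r * ren kt n \<le> Z n" "Z n \<le> R * ren kt n" using bnd n1(1) by auto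
    have Zp: "Z n > 0" using b(1) mult_pos_pos[OF r rp] by linarith
    have up: "ln (Z n) \<le> ln R"
    proof -
      have "ln (Z n) \<le> ln (R * ren kt n)" using b Zp by simp
      also have "\<dots> = ln R + ln (ren kt n)" using R rp by (simp add: ln_mult)
      also have "ln (ren kt n) \<le> 0" using rp r1 by simp
      finally show ?thesis by simp
    qed
    have lo: "ln (Z n) \<ge> ln r - e / 2 * n"
    proof -
      have "ln (Z n) \<ge> ln (r * ren kt n)" using b Zp r rp by (subst ln_le_cancel_iff) auto
      moreover have "ln (r * ren kt n) = ln r + ln (ren kt n)" using r rp by (simp add: ln_mult)
      moreover have "ln (ren kt n) \<ge> - 2 * (e / 4) * n" using N1 n1 by simp
      ultimately show ?thesis by simp
    qed
    have np: "real n > 0" using n1 by simp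
    have g1: "0 \<le> 2 * \<bar>ln r\<bar> / e" "0 \<le> \<bar>ln R\<bar> / e" using e by auto
    have h1: "\<bar>ln R\<bar> < e * n"
    proof -
      have "\<bar>ln R\<bar> / e < n" using N2 n1(3) g1 by linarith
      then show ?thesis using e by (simp add: field_simps)
    qed
    have h2: "\<bar>ln r\<bar> < e / 2 * n"
    proof -
      have "2 * \<bar>ln r\<bar> / e < n" using N2 n1(3) g1 by linarith
      then show ?thesis using e by (simp add: field_simps)
    qed
    have "\<bar>ln (Z n)\<bar> < e * n" using up lo h1 h2 by linarith
    then show "norm (ln (Z n) / real n - 0) < e" using np by (simp add: field_simps)
  qed
qed

lemma super_not:
  assumes kt: "\<And>t. kt t \<ge> 0" and k0: "kt 0 = 0" and sk: "summable kt" and gt: "suminf kt > 1"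
    and r: "r > 0"
    and bnd: "\<And>n. n \<ge> 1 \<Longrightarrow> r * ren kt n \<le> Z n"
  shows "\<not> (\<lambda>N. ln (Z N) / real N) \<longlonglongrightarrow> 0"
proof
  assume lim: "(\<lambda>N. ln (Z N) / real N) \<longlonglongrightarrow> 0"
  obtain n0 where n0: "ren kt n0 > 1" using ren_super[OF kt k0 sk gt] by blast
  have n0p: "n0 \<ge> 1" using n0 by (cases n0) auto
  define c where "c = ln (ren kt n0) / n0"
  have c: "c > 0" using n0 n0p by (simp add: c_def)
  obtain N where N: "\<And>n. n \<ge> N \<Longrightarrow> norm (ln (Z n) / real n - 0) < c / 2"
    using LIMSEQ_D[OF lim, of "c/2"] c by auto
  obtain k :: nat where k: "k \<ge> 2 * \<bar>ln r\<bar> / (c * n0) + N + 1" by (meson real_arch_simple)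
  have g: "0 \<le> 2 * \<bar>ln r\<bar> / (c * n0)" using c by simp
  have "real k \<ge> 1" "real k \<ge> real N" using k g by linarith+
  then have k1: "k \<ge> 1" "k \<ge> N" by simp_all
  define n where "n = k * n0"
  have nN: "n \<ge> N" unfolding n_def using k1 n0p by (metis le_trans mult_le_mono2 mult.right_neutral)
  have n1: "n \<ge> 1" unfolding n_def using k1 n0p by simp
  have rp: "ren kt n0 ^ k > 0" using n0 by simp
  have "Z n \<ge> r * ren kt n" using bnd n1 by simp
  moreover have "ren kt n \<ge> ren kt n0 ^ k" unfolding n_def by (rule ren_pow[OF kt])
  ultimately have Zb: "Z n \<ge> r * ren kt n0 ^ k" using r mult_left_mono[of "ren kt n0 ^ k" "ren kt n" r] by linarith
  have "ln (Z n) \<ge> ln (r * ren kt n0 ^ k)" proof -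
    have "Z n > 0" using Zb mult_pos_pos[OF r rp] by linarith
    then show ?thesis using Zb mult_pos_pos[OF r rp] by (subst ln_le_cancel_iff) auto
  qed
  also have "ln (r * ren kt n0 ^ k) = ln r + k * ln (ren kt n0)"
    using r n0 by (simp add: ln_mult ln_realpow)
  also have "k * ln (ren kt n0) = c * n" using n0p by (simp add: c_def n_def)
  finally have L: "ln (Z n) \<ge> ln r + c * n" .
  have "2 * \<bar>ln r\<bar> / (c * n0) \<le> k" using k by simp
  then have "2 * \<bar>ln r\<bar> \<le> k * (c * n0)" using c n0p by (simp add: field_simps)
  then have h: "\<bar>ln r\<bar> \<le> c / 2 * n" by (simp add: n_def algebra_simps)
  have np: "real n > 0" using n1 by simp
  have "ln (Z n) \<ge> c / 2 * n" using L h by linarith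
  then have "ln (Z n) / n \<ge> c / 2" using np by (simp add: field_simps)
  moreover have "norm (ln (Z n) / real n - 0) < c / 2" by (rule N[OF nN])
  then have "ln (Z n) / real n < c / 2" by (metis abs_ge_self order.strict_trans1 diff_zero real_norm_def)
  ultimately show False by linarith
qed



definition cc :: "real \<Rightarrow> real \<Rightarrow> nat set \<Rightarrow> nat \<Rightarrow> real" where
  "cc a0 a1 S j = a0 * (if j \<in> S then 1 else 0) + a1 * (if Suc j \<in> S then 1 else 0)"

lemma sum_restrict_atMost:
  fixes S :: "nat set"
  assumes "S \<subseteq> {1..N}"
  shows "(\<Sum>j\<le>N. (if j \<in> S then x j else 0)) = (\<Sum>n\<in>S. (x n :: real))"
proof -
  have "(\<Sum>j\<le>N. (if j \<in> S then x j else 0)) = sum x ({..N} \<inter> S)"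
    using sum.inter_restrict[of "{..N}" x S] by simp
  also have "{..N} \<inter> S = S" using assms by auto
  finally show ?thesis .
qed

lemma sum_restrict_shift:
  fixes S :: "nat set"
  assumes "S \<subseteq> {1..N}"
  shows "(\<Sum>j\<le>N. (if Suc j \<in> S then x j else 0)) = (\<Sum>n\<in>S. (x (n - 1) :: real))"
proof -
  have "(\<Sum>j\<le>N. (if Suc j \<in> S then x j else 0)) = sum x {j\<in>{..N}. Suc j \<in> S}"
    by (rule sum.inter_filter[symmetric]) simp
  also have "\<dots> = (\<Sum>n\<in>S. x (n - 1))"
    by (rule sum.reindex_bij_witness[of _ "\<lambda>n. n - 1" Suc]) (use assms in \<open>auto simp: subset_iff\<close>)
  finally show ?thesis .
qed

lemma expect:
  assumes S: "S \<subseteq> {1..N}"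
  shows "(\<Sum>e\<in>PiE {0..N} (\<lambda>_. {-1, 1::int}). exp (\<Sum>n\<in>S. \<beta> * omega a0 a1 e n + h)) / 2 ^ (N + 1)
       = exp (h * card S) * (\<Prod>j\<le>N. cosh (\<beta> * cc a0 a1 S j))"
proof -
  have key: "(\<Sum>n\<in>S. \<beta> * omega a0 a1 e n + h)
      = h * card S + (\<Sum>j\<le>N. \<beta> * cc a0 a1 S j * real_of_int (e j))" for e :: "nat \<Rightarrow> int"
  proof -
    have "(\<Sum>j\<le>N. \<beta> * cc a0 a1 S j * real_of_int (e j))
        = \<beta> * a0 * (\<Sum>j\<le>N. (if j \<in> S then real_of_int (e j) else 0))
          + \<beta> * a1 * (\<Sum>j\<le>N. (if Suc j \<in> S then real_of_int (e j) else 0))"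
      unfolding sum_distrib_left sum.distrib[symmetric] by (rule sum.cong) (auto simp: cc_def algebra_simps)
    also have "\<dots> = \<beta> * a0 * (\<Sum>n\<in>S. real_of_int (e n)) + \<beta> * a1 * (\<Sum>n\<in>S. real_of_int (e (n - 1)))"
      using sum_restrict_atMost[OF S] sum_restrict_shift[OF S] by simp
    finally have a: "(\<Sum>j\<le>N. \<beta> * cc a0 a1 S j * real_of_int (e j)) =
       \<beta> * a0 * (\<Sum>n\<in>S. real_of_int (e n)) + \<beta> * a1 * (\<Sum>n\<in>S. real_of_int (e (n - 1)))" .
    show ?thesis unfolding a
      by (simp add: omega_def sum.distrib sum_distrib_left algebra_simps)
  qed
  have "(\<Sum>e\<in>PiE {0..N} (\<lambda>_. {-1, 1::int}). exp (\<Sum>n\<in>S. \<beta> * omega a0 a1 e n + h))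
     = (\<Sum>e\<in>PiE {..N} (\<lambda>_. {-1, 1::int}). exp (h * card S) *
          (\<Prod>j\<le>N. exp (\<beta> * cc a0 a1 S j * real_of_int (e j))))"
    by (simp add: key exp_add exp_sum atLeast0AtMost)
  also have "\<dots> = exp (h * card S) * (\<Prod>j\<le>N. \<Sum>y\<in>{-1, 1::int}. exp (\<beta> * cc a0 a1 S j * real_of_int y))"
  proof -
    have "(\<Prod>j\<le>N. \<Sum>y\<in>{-1, 1::int}. exp (\<beta> * cc a0 a1 S j * real_of_int y)) =
        (\<Sum>e\<in>PiE {..N} (\<lambda>_. {-1, 1::int}). (\<Prod>j\<le>N. exp (\<beta> * cc a0 a1 S j * real_of_int (e j))))"
      by (rule prod_sum_PiE) auto
    then show ?thesis by (simp add: sum_distrib_left)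
  qed
  also have "(\<Prod>j\<le>N. \<Sum>y\<in>{-1, 1::int}. exp (\<beta> * cc a0 a1 S j * real_of_int y))
      = (\<Prod>j\<le>N. 2 * cosh (\<beta> * cc a0 a1 S j))"
    by (intro prod.cong refl) (simp add: cosh_def)
  also have "\<dots> = 2 ^ (N + 1) * (\<Prod>j\<le>N. cosh (\<beta> * cc a0 a1 S j))"
    by (simp add: prod.distrib)
  finally show ?thesis by simp
qed

definition Fam :: "nat \<Rightarrow> nat set set" where
  "Fam N = {S. S \<subseteq> {1..N} \<and> N \<in> S}"

definition Pc :: "real \<Rightarrow> real \<Rightarrow> real \<Rightarrow> nat set \<Rightarrow> nat \<Rightarrow> real" where
  "Pc a0 a1 \<beta> T M = (\<Prod>j\<le>M. cosh (\<beta> * cc a0 a1 T j))"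

definition Wt :: "(nat \<Rightarrow> real) \<Rightarrow> real \<Rightarrow> real \<Rightarrow> real \<Rightarrow> real \<Rightarrow> nat \<Rightarrow> nat set \<Rightarrow> real" where
  "Wt K a0 a1 \<beta> h N S = renw K 0 (sorted_list_of_set S) * (exp (h * card S) * Pc a0 a1 \<beta> S N)"

definition cfac :: "real \<Rightarrow> real \<Rightarrow> real \<Rightarrow> nat \<Rightarrow> real" where
  "cfac a0 a1 \<beta> t = (if t = 1 then cosh (\<beta> * (a0 + a1)) else cosh (\<beta> * a0) * cosh (\<beta> * a1))"

lemma Zann_Wt: "Zann K a0 a1 N \<beta> h = (\<Sum>S\<in>Fam N. Wt K a0 a1 \<beta> h N S)"
  unfolding Zann_def Fam_def Wt_def Pc_def
proof (intro sum.cong refl)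
  fix S assume "S \<in> {S. S \<subseteq> {1..N} \<and> N \<in> S}"
  then have S: "S \<subseteq> {1..N}" by simp
  show "renw K 0 (sorted_list_of_set S) *
        ((\<Sum>e\<in>PiE {0..N} (\<lambda>_. {-1, 1::int}). exp (\<Sum>n\<in>S. \<beta> * omega a0 a1 e n + h)) / 2 ^ (N + 1)) =
        renw K 0 (sorted_list_of_set S) * (exp (h * card S) * (\<Prod>j\<le>N. cosh (\<beta> * cc a0 a1 S j)))"
    by (simp only: expect[OF S])
qed

lemma renw_snoc: "renw K p (xs @ [t]) = renw K p xs * K (t - last (p # xs))"
  by (induction xs arbitrary: p) auto

lemma sorted_snoc:
  assumes "finite S" "\<forall>x\<in>S. x < N"
  shows "sorted_list_of_set (insert N S) = sorted_list_of_set S @ [(N::nat)]"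
proof -
  have nS: "N \<notin> S" using assms by auto
  have H: "sorted_wrt (<) (sorted_list_of_set S @ [N]) \<and> set (sorted_list_of_set S @ [N]) = insert N S
        \<and> length (sorted_list_of_set S @ [N]) = card (insert N S)"
    using assms nS by (auto simp: sorted_wrt_append)
  show ?thesis using H sorted_list_of_set_unique assms(1) finite_insert by metis
qed

lemma Pc_ext:
  assumes "T \<subseteq> {..M}" "M \<le> N"
  shows "Pc a0 a1 \<beta> T N = Pc a0 a1 \<beta> T M"
  unfolding Pc_def
proof (rule prod.mono_neutral_right)
  show "\<forall>i\<in>{..N} - {..M}. cosh (\<beta> * cc a0 a1 T i) = 1"
    using assms by (auto simp: cc_def subset_iff)
qed (use assms in auto)

lemma Pc_ins:
  assumes S: "S \<subseteq> {1..m}" and m: "m \<in> S" and mN: "m < N"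
  shows "Pc a0 a1 \<beta> (insert N S) N = Pc a0 a1 \<beta> S m * cfac a0 a1 \<beta> (N - m)"
proof -
  have "m \<ge> 1" using m S by auto
  then have N2: "N \<ge> 2" using mN by simp
  define n where "n = N - 2"
  have N: "N = Suc (Suc n)" using N2 by (simp add: n_def)
  have mn: "m \<le> Suc n" using mN N by simp
  have a: "Pc a0 a1 \<beta> (insert N S) N = Pc a0 a1 \<beta> (insert N S) n *
      cosh (\<beta> * cc a0 a1 (insert N S) (Suc n)) * cosh (\<beta> * cc a0 a1 (insert N S) N)"
    unfolding Pc_def N by simp
  have b: "Pc a0 a1 \<beta> (insert N S) n = Pc a0 a1 \<beta> S n"
    unfolding Pc_def by (intro prod.cong refl) (auto simp: cc_def N)
  have c: "Pc a0 a1 \<beta> S m = Pc a0 a1 \<beta> S (Suc n)"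
    by (rule Pc_ext[symmetric]) (use S mn in auto)
  have d: "Pc a0 a1 \<beta> S (Suc n) = Pc a0 a1 \<beta> S n * cosh (\<beta> * cc a0 a1 S (Suc n))"
    unfolding Pc_def by simp
  have NS: "N \<notin> S" "Suc N \<notin> S" using S mN by auto
  show ?thesis
  proof (cases "m = Suc n")
    case True
    then have "N - m = 1" using N by simp
    then show ?thesis using a b c d NS m True
      by (simp add: cc_def cfac_def N algebra_simps)
  next
    case False
    then have "Suc n \<notin> S" using S mn by auto
    moreover have "N - m \<noteq> 1" using False N mn by simp
    ultimately show ?thesis using a b c d NS
      by (simp add: cc_def cfac_def N algebra_simps)
  qed
qed

lemma Fam_finite: "finite (Fam m)"
  by (rule finite_subset[of _ "Pow {1..m}"]) (auto simp: Fam_def)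

lemma Fam_elem:
  assumes "S \<in> Fam m"
  shows "finite S" "m \<in> S" "S \<subseteq> {1..m}" "m \<ge> 1" "\<forall>x\<in>S - {m}. x < m"
proof -
  show "S \<subseteq> {1..m}" "m \<in> S" using assms by (auto simp: Fam_def)
  then show "finite S" "m \<ge> 1" "\<forall>x\<in>S - {m}. x < m" using finite_subset[of S "{1..m}"] by auto
qed

lemma Wt_ins:
  assumes S: "S \<in> Fam m" and mN: "m < N"
  shows "Wt K a0 a1 \<beta> h N (insert N S) = Wt K a0 a1 \<beta> h m S * (exp h * K (N - m) * cfac a0 a1 \<beta> (N - m))"
proof -
  note E = Fam_elem[OF S]
  have Sm: "insert m (S - {m}) = S" using E by auto
  have "sorted_list_of_set (insert m (S - {m})) = sorted_list_of_set (S - {m}) @ [m]"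
    by (rule sorted_snoc) (use E in auto)
  then have s1: "sorted_list_of_set S = sorted_list_of_set (S - {m}) @ [m]" by (simp only: Sm)
  have lt: "\<forall>x\<in>S. x < N" using E mN by auto
  have s2: "sorted_list_of_set (insert N S) = sorted_list_of_set S @ [N]"
    by (rule sorted_snoc) (use E lt in auto)
  have r: "renw K 0 (sorted_list_of_set (insert N S)) = renw K 0 (sorted_list_of_set S) * K (N - m)"
    unfolding s2 renw_snoc by (simp add: s1)
  have NS: "N \<notin> S" using lt by auto
  have c: "card (insert N S) = Suc (card S)" using E NS by simp
  have p: "Pc a0 a1 \<beta> (insert N S) N = Pc a0 a1 \<beta> S m * cfac a0 a1 \<beta> (N - m)"
    by (rule Pc_ins) (use E mN in auto)
  show ?thesis unfolding Wt_def r c p by (simp add: exp_add distrib_left algebra_simps)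
qed

lemma Wt_single:
  assumes N: "N \<ge> 1"
  shows "Wt K a0 a1 \<beta> h N {N} = exp h * K N * (cosh (\<beta> * a0) * cosh (\<beta> * a1))"
proof -
  define n where "n = N - 1"
  have Nn: "N = Suc n" using N by (simp add: n_def)
  have a: "Pc a0 a1 \<beta> {N} N = Pc a0 a1 \<beta> {N} n * cosh (\<beta> * a0)"
    unfolding Pc_def Nn by (simp add: cc_def)
  have b: "Pc a0 a1 \<beta> {N} n = cosh (\<beta> * a1)"
  proof (cases n)
    case 0 then show ?thesis unfolding Pc_def by (simp add: cc_def Nn)
  next
    case (Suc n')
    have "Pc a0 a1 \<beta> {N} n = (\<Prod>j\<le>n'. cosh (\<beta> * cc a0 a1 {N} j)) * cosh (\<beta> * cc a0 a1 {N} n)"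
      unfolding Pc_def Suc by simp
    also have "(\<Prod>j\<le>n'. cosh (\<beta> * cc a0 a1 {N} j)) = 1"
      by (rule prod.neutral) (auto simp: cc_def Nn Suc)
    finally show ?thesis by (simp add: cc_def Nn)
  qed
  show ?thesis unfolding Wt_def a b by simp
qed

lemma Fam_decomp:
  assumes N: "N \<ge> 1"
  shows "Fam N = insert {N} (\<Union>m\<in>{1..<N}. insert N ` Fam m)"
proof (rule set_eqI iffI)+
  fix S assume S: "S \<in> Fam N"
  show "S \<in> insert {N} (\<Union>m\<in>{1..<N}. insert N ` Fam m)"
  proof (cases "S = {N}")
    case True then show ?thesis by simp
  next
    case False
    define S' where "S' = S - {N}"
    have fS: "finite S'" using Fam_elem[OF S] by (simp add: S'_def)
    have ne: "S' \<noteq> {}" using False Fam_elem[OF S] by (auto simp: S'_def)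
    define m where "m = Max S'"
    have mS: "m \<in> S'" using fS ne by (simp add: m_def)
    have le: "\<forall>x\<in>S'. x \<le> m" using fS by (simp add: m_def)
    have sub: "S' \<subseteq> {1..N} - {N}" using Fam_elem[OF S] by (auto simp: S'_def)
    have m1: "m \<in> {1..<N}" using mS sub by auto
    have "S' \<in> Fam m" using mS le sub by (auto simp: Fam_def)
    moreover have "S = insert N S'" using Fam_elem[OF S] by (auto simp: S'_def)
    ultimately show ?thesis using m1 by blast
  qed
next
  fix S assume "S \<in> insert {N} (\<Union>m\<in>{1..<N}. insert N ` Fam m)"
  then show "S \<in> Fam N" using N by (auto simp: Fam_def)
qed

lemma Zann_rec:
  assumes N: "N \<ge> 1"
  shows "Zann K a0 a1 N \<beta> h = exp h * K N * (cosh (\<beta> * a0) * cosh (\<beta> * a1))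
     + (\<Sum>m\<in>{1..<N}. exp h * K (N - m) * cfac a0 a1 \<beta> (N - m) * Zann K a0 a1 m \<beta> h)"
proof -
  let ?W = "Wt K a0 a1 \<beta> h"
  have nin: "{N} \<notin> (\<Union>m\<in>{1..<N}. insert N ` Fam m)"
  proof
    assume "{N} \<in> (\<Union>m\<in>{1..<N}. insert N ` Fam m)"
    then obtain m S where "m \<in> {1..<N}" "S \<in> Fam m" "{N} = insert N S" by auto
    then show False using Fam_elem(2,3)[of S m] by auto
  qed
  have disj: "\<forall>i\<in>{1..<N}. \<forall>j\<in>{1..<N}. i \<noteq> j \<longrightarrow> insert N ` Fam i \<inter> insert N ` Fam j = {}"
  proof (intro ballI impI)
    fix i j assume ij: "i \<in> {1..<N}" "j \<in> {1..<N}" "i \<noteq> j"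
    show "insert N ` Fam i \<inter> insert N ` Fam j = {}"
    proof (rule ccontr)
      assume "insert N ` Fam i \<inter> insert N ` Fam j \<noteq> {}"
      then obtain S T where ST: "S \<in> Fam i" "T \<in> Fam j" "insert N S = insert N T" by auto
      have "N \<notin> S" "N \<notin> T" using Fam_elem(3)[OF ST(1)] Fam_elem(3)[OF ST(2)] ij by auto
      then have "S = T" using ST(3) by (metis insert_ident)
      then show False using Fam_elem(2,3)[OF ST(1)] Fam_elem(2,3)[OF ST(2)] ij(3) by force
    qed
  qed
  have inj: "inj_on (insert N) (Fam m)" if "m \<in> {1..<N}" for m
  proof (rule inj_onI)
    fix S T assume ST: "S \<in> Fam m" "T \<in> Fam m" "insert N S = insert N T"
    have "N \<notin> S" "N \<notin> T" using Fam_elem(3)[OF ST(1)] Fam_elem(3)[OF ST(2)] that by auto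
    then show "S = T" using ST(3) by (metis insert_ident)
  qed
  have "Zann K a0 a1 N \<beta> h = (\<Sum>S\<in>Fam N. ?W N S)" by (rule Zann_Wt)
  also have "\<dots> = ?W N {N} + (\<Sum>S\<in>(\<Union>m\<in>{1..<N}. insert N ` Fam m). ?W N S)"
    unfolding Fam_decomp[OF N] by (rule sum.insert[OF _ nin]) (auto intro: Fam_finite)
  also have "(\<Sum>S\<in>(\<Union>m\<in>{1..<N}. insert N ` Fam m). ?W N S) = (\<Sum>m\<in>{1..<N}. \<Sum>S\<in>insert N ` Fam m. ?W N S)"
    by (rule sum.UNION_disjoint[OF _ _ disj]) (auto intro: Fam_finite)
  also have "\<dots> = (\<Sum>m\<in>{1..<N}. \<Sum>S\<in>Fam m. ?W N (insert N S))"
  proof (rule sum.cong[OF refl])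
    fix m assume m: "m \<in> {1..<N}"
    show "(\<Sum>S\<in>insert N ` Fam m. ?W N S) = (\<Sum>S\<in>Fam m. ?W N (insert N S))"
      using sum.reindex[OF inj[OF m], of "?W N"] by (simp add: o_def)
  qed
  also have "\<dots> = (\<Sum>m\<in>{1..<N}. \<Sum>S\<in>Fam m. ?W m S * (exp h * K (N - m) * cfac a0 a1 \<beta> (N - m)))"
    by (intro sum.cong refl) (simp add: Wt_ins)
  also have "\<dots> = (\<Sum>m\<in>{1..<N}. exp h * K (N - m) * cfac a0 a1 \<beta> (N - m) * Zann K a0 a1 m \<beta> h)"
    by (intro sum.cong refl) (simp add: Zann_Wt sum_distrib_right mult.commute)
  finally show ?thesis using Wt_single[OF N] by simp
qed

definition ktf :: "(nat \<Rightarrow> real) \<Rightarrow> real \<Rightarrow> real \<Rightarrow> real \<Rightarrow> real \<Rightarrow> nat \<Rightarrow> real" where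
  "ktf K a0 a1 \<beta> h t = (if t = 0 then 0 else exp h * K t * cfac a0 a1 \<beta> t)"

lemma cfac_pos: "cfac a0 a1 \<beta> t > 0"
  by (simp add: cfac_def)

lemma ktf_nonneg: "(\<And>n. n \<ge> 1 \<Longrightarrow> K n > 0) \<Longrightarrow> ktf K a0 a1 \<beta> h t \<ge> 0"
  using cfac_pos[of a0 a1 \<beta> t] by (cases "t = 0") (auto simp: ktf_def intro!: mult_nonneg_nonneg less_imp_le)

lemma compare:
  fixes K :: "nat \<Rightarrow> real" and a0 a1 \<beta> h :: real
  assumes Kpos: "\<And>n. n \<ge> 1 \<Longrightarrow> K n > 0"
  defines "\<rho> \<equiv> cosh (\<beta> * a0) * cosh (\<beta> * a1) / cosh (\<beta> * (a0 + a1))"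
  shows "n \<ge> 1 \<Longrightarrow> min 1 \<rho> * ren (ktf K a0 a1 \<beta> h) n \<le> Zann K a0 a1 n \<beta> h
      \<and> Zann K a0 a1 n \<beta> h \<le> max 1 \<rho> * ren (ktf K a0 a1 \<beta> h) n"
proof (induction n rule: less_induct)
  case (less n)
  let ?k = "ktf K a0 a1 \<beta> h"
  let ?Z = "\<lambda>m. Zann K a0 a1 m \<beta> h"
  let ?r = "min 1 \<rho>" and ?R = "max 1 \<rho>"
  have kn: "\<And>t. ?k t \<ge> 0" by (rule ktf_nonneg[OF Kpos])
  have Z: "?Z n = exp h * K n * (cosh (\<beta> * a0) * cosh (\<beta> * a1)) + (\<Sum>m\<in>{1..<n}. ?k (n - m) * ?Z m)"
    unfolding Zann_rec[OF less.prems] by (intro arg_cong2[where f="(+)"] refl sum.cong) (auto simp: ktf_def)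
  have "{..<n} = insert 0 {1..<n}" using less.prems by auto
  then have U: "ren ?k n = ?k n + (\<Sum>m\<in>{1..<n}. ren ?k m * ?k (n - m))"
    using less.prems by (simp add: ren_pos_n)
  have first: "?r * ?k n \<le> exp h * K n * (cosh (\<beta> * a0) * cosh (\<beta> * a1))
      \<and> exp h * K n * (cosh (\<beta> * a0) * cosh (\<beta> * a1)) \<le> ?R * ?k n"
  proof (cases "n = 1")
    case True
    have e: "exp h * K n * (cosh (\<beta> * a0) * cosh (\<beta> * a1)) = \<rho> * ?k n"
      using True by (simp add: ktf_def cfac_def \<rho>_def)
    show ?thesis unfolding e using kn[of n]
      by (auto intro: mult_right_mono)
  next
    case False
    then have e: "exp h * K n * (cosh (\<beta> * a0) * cosh (\<beta> * a1)) = ?k n"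
      using less.prems by (simp add: ktf_def cfac_def)
    have rr: "?r \<le> 1" "1 \<le> ?R" by auto
    show ?thesis unfolding e using mult_right_mono[OF rr(1) kn[of n]] mult_right_mono[OF rr(2) kn[of n]]
      by simp
  qed
  have sl: "?r * (\<Sum>m\<in>{1..<n}. ren ?k m * ?k (n - m)) \<le> (\<Sum>m\<in>{1..<n}. ?k (n - m) * ?Z m)"
    unfolding sum_distrib_left
  proof (rule sum_mono)
    fix m assume m: "m \<in> {1..<n}"
    have "?r * ren ?k m \<le> ?Z m" using less.IH[of m] m by auto
    then show "?r * (ren ?k m * ?k (n - m)) \<le> ?k (n - m) * ?Z m"
      using kn[of "n - m"] by (metis mult.assoc mult.commute mult_right_mono)
  qed
  have su: "(\<Sum>m\<in>{1..<n}. ?k (n - m) * ?Z m) \<le> ?R * (\<Sum>m\<in>{1..<n}. ren ?k m * ?k (n - m))"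
    unfolding sum_distrib_left
  proof (rule sum_mono)
    fix m assume m: "m \<in> {1..<n}"
    have "?Z m \<le> ?R * ren ?k m" using less.IH[of m] m by auto
    then show "?k (n - m) * ?Z m \<le> ?R * (ren ?k m * ?k (n - m))"
      using kn[of "n - m"] by (metis mult.assoc mult.commute mult_right_mono)
  qed
  show ?case unfolding Z U using first sl su by (simp add: distrib_left)
qed

lemma ktf_sums:
  fixes K :: "nat \<Rightarrow> real" and a0 a1 \<beta> h :: real
  assumes Ksum: "(\<lambda>n. K (Suc n)) sums 1"
  shows "ktf K a0 a1 \<beta> h sums (exp h * (K 1 * cosh (\<beta> * (a0 + a1)) + (1 - K 1) * (cosh (\<beta> * a0) * cosh (\<beta> * a1))))"
proof -
  let ?C1 = "cosh (\<beta> * (a0 + a1))" and ?C2 = "cosh (\<beta> * a0) * cosh (\<beta> * a1)"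
  have eq: "(\<lambda>t. ktf K a0 a1 \<beta> h (Suc t)) = (\<lambda>t. exp h * ?C2 * K (Suc t) +
      (if t = 0 then exp h * K 1 * (?C1 - ?C2) else 0))"
    by (rule ext) (auto simp: ktf_def cfac_def algebra_simps)
  have "(\<lambda>t. exp h * ?C2 * K (Suc t) + (if t = 0 then exp h * K 1 * (?C1 - ?C2) else 0)) sums
      (exp h * ?C2 * 1 + exp h * K 1 * (?C1 - ?C2))"
  proof (intro sums_add sums_mult Ksum)
    show "(\<lambda>t. if t = 0 then exp h * K 1 * (?C1 - ?C2) else 0) sums (exp h * K 1 * (?C1 - ?C2))"
      using sums_single[of 0 "\<lambda>_. exp h * K 1 * (?C1 - ?C2)"] by simp
  qed
  then have "(\<lambda>t. ktf K a0 a1 \<beta> h (Suc t)) sums (exp h * (K 1 * ?C1 + (1 - K 1) * ?C2))"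
    unfolding eq by (simp add: algebra_simps)
  from sums_Suc[OF this] have "ktf K a0 a1 \<beta> h sums (exp h * (K 1 * ?C1 + (1 - K 1) * ?C2) + ktf K a0 a1 \<beta> h 0)" .
  moreover have "ktf K a0 a1 \<beta> h 0 = 0" by (simp add: ktf_def)
  ultimately show ?thesis by simp
qed

lemma hca_value:
  fixes K :: "nat \<Rightarrow> real" and a0 a1 \<beta> :: real
  assumes Kpos: "\<And>n. n \<ge> 1 \<Longrightarrow> K n > 0"
    and Ksum: "(\<lambda>n. K (Suc n)) sums 1"
  defines "\<Lambda> \<equiv> K 1 * cosh (\<beta> * (a0 + a1)) + (1 - K 1) * (cosh (\<beta> * a0) * cosh (\<beta> * a1))"
  shows "\<Lambda> > 0" "hca K a0 a1 \<beta> = - ln \<Lambda>"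
proof -
  have K1le: "K 1 \<le> 1"
  proof -
    have "(\<Sum>i<1. K (Suc i)) \<le> (\<Sum>i. K (Suc i))"
      by (intro sum_le_suminf) (use Ksum Kpos in \<open>auto simp: sums_iff less_imp_le\<close>)
    then show ?thesis using Ksum by (simp add: sums_iff)
  qed
  have K1: "K 1 > 0" using Kpos by simp
  show Lp: "\<Lambda> > 0" unfolding \<Lambda>_def
    using K1 K1le by (intro add_pos_nonneg mult_pos_pos mult_nonneg_nonneg) auto
  define hc where "hc = - ln \<Lambda>"
  define \<rho> where "\<rho> = cosh (\<beta> * a0) * cosh (\<beta> * a1) / cosh (\<beta> * (a0 + a1))"
  have \<rho>: "\<rho> > 0" by (simp add: \<rho>_def)
  let ?S = "{h. (\<lambda>N. ln (Zann K a0 a1 N \<beta> h) / real N) \<longlonglongrightarrow> 0}"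
  have kt: "\<And>h t. ktf K a0 a1 \<beta> h t \<ge> 0" by (rule ktf_nonneg[OF Kpos])
  have k0: "\<And>h. ktf K a0 a1 \<beta> h 0 = 0" by (simp add: ktf_def)
  have k1: "\<And>h. ktf K a0 a1 \<beta> h 1 > 0" using K1 by (simp add: ktf_def cfac_pos)
  have ks: "\<And>h. ktf K a0 a1 \<beta> h sums (exp h * \<Lambda>)" unfolding \<Lambda>_def by (rule ktf_sums[OF Ksum])
  have bnd: "\<And>h n. n \<ge> 1 \<Longrightarrow> min 1 \<rho> * ren (ktf K a0 a1 \<beta> h) n \<le> Zann K a0 a1 n \<beta> h
      \<and> Zann K a0 a1 n \<beta> h \<le> max 1 \<rho> * ren (ktf K a0 a1 \<beta> h) n"
    unfolding \<rho>_def by (rule compare[OF Kpos])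
  have "exp hc * \<Lambda> = 1" using Lp by (simp add: hc_def exp_minus field_simps)
  then have ksc: "ktf K a0 a1 \<beta> hc sums 1" using ks[of hc] by simp
  have inS: "hc \<in> ?S"
    using crit_limit[OF kt k0 k1 ksc, of "min 1 \<rho>" "max 1 \<rho>" "\<lambda>n. Zann K a0 a1 n \<beta> hc"] \<rho> bnd
    by auto
  have le: "h \<le> hc" if "h \<in> ?S" for h
  proof (rule ccontr)
    assume "\<not> h \<le> hc"
    then have "exp h * \<Lambda> > exp hc * \<Lambda>" using Lp by simp
    also have "exp hc * \<Lambda> = 1" using Lp by (simp add: hc_def exp_minus field_simps)
    finally have gt: "suminf (ktf K a0 a1 \<beta> h) > 1" using ks[of h] by (simp add: sums_iff)
    have "\<not> (\<lambda>N. ln (Zann K a0 a1 N \<beta> h) / real N) \<longlonglongrightarrow> 0"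
      using super_not[OF kt k0 _ gt, of "min 1 \<rho>" "\<lambda>n. Zann K a0 a1 n \<beta> h"] \<rho> bnd ks[of h]
      by (auto simp: sums_iff)
    then show False using that by simp
  qed
  show "hca K a0 a1 \<beta> = - ln \<Lambda>"
    unfolding hca_def hc_def[symmetric] by (rule cSup_eq_maximum[OF inS]) (use le in auto)
qed



lemma Sig_eq: "Sig = {(-1,-1),(-1,1),(1,-1),(1,1)}"
  by (auto simp: Sig_def)

lemma sum_Sig: "(\<Sum>y\<in>Sig. f y) = f (-1,-1) + f (-1,1) + f (1,-1) + f (1,1)"
  by (simp add: Sig_eq add.assoc)

lemma matpow1: "x \<in> Sig \<Longrightarrow> matpow Qm (Suc 0) x y = Qm x y"
  by (simp add: sum_Sig) (auto simp: Sig_def)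

lemma matpow2: "x \<in> Sig \<Longrightarrow> y \<in> Sig \<Longrightarrow> matpow Qm (Suc (Suc n)) x y = 1/4"
proof (induction n arbitrary: y)
  case 0
  then show ?case
    by (simp add: sum_Sig matpow1 del: matpow.simps(2)) (auto simp: Sig_def Qm_def)
next
  case (Suc n)
  have "matpow Qm (Suc (Suc (Suc n))) x y = (\<Sum>z\<in>Sig. matpow Qm (Suc (Suc n)) x z * Qm z y)"
    by simp
  also have "\<dots> = (\<Sum>z\<in>Sig. 1/4 * Qm z y)"
    by (intro sum.cong refl) (use Suc in simp)
  also have "\<dots> = 1/4" using Suc.prems by (simp add: sum_Sig) (auto simp: Sig_def Qm_def)
  finally show ?case .
qed

lemma matpowS: "x \<in> Sig \<Longrightarrow> y \<in> Sig \<Longrightarrow> matpow Qm (Suc t) x y = (if t = 0 then Qm x y else 1/4)"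
  by (cases t) (simp_all add: matpow1 matpow2 del: matpow.simps(2))

lemma Aval:
  assumes Ksum: "(\<lambda>n. K (Suc n)) sums 1" and xy: "x \<in> Sig" "y \<in> Sig"
  shows "Amat K a0 a1 \<beta> 0 x y = exp (\<beta> * fobs a0 a1 y) * (K 1 * Qm x y + (1 - K 1) / 4)"
proof -
  let ?W = "exp (\<beta> * fobs a0 a1 y)"
  have eq: "(\<lambda>t. Mmat K a0 a1 (Suc t) \<beta> 0 x y) = (\<lambda>t. ?W / 4 * K (Suc t) +
       (if t = 0 then ?W * K 1 * (Qm x y - 1/4) else 0))"
    by (rule ext) (auto simp: Mmat_def matpowS[OF xy] algebra_simps simp del: matpow.simps(2))
  have "(\<lambda>t. ?W / 4 * K (Suc t) + (if t = 0 then ?W * K 1 * (Qm x y - 1/4) else 0)) sums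
      (?W / 4 * 1 + ?W * K 1 * (Qm x y - 1/4))"
  proof (intro sums_add sums_mult Ksum)
    show "(\<lambda>t. if t = 0 then ?W * K 1 * (Qm x y - 1/4) else 0) sums (?W * K 1 * (Qm x y - 1/4))"
      using sums_single[of 0 "\<lambda>_. ?W * K 1 * (Qm x y - 1/4)"] by simp
  qed
  moreover have val: "?W / 4 * 1 + ?W * K 1 * (Qm x y - 1/4) = ?W * (K 1 * Qm x y + (1 - K 1) / 4)"
    by (simp add: field_simps)
  ultimately have "(\<lambda>t. Mmat K a0 a1 (Suc t) \<beta> 0 x y) sums (?W * (K 1 * Qm x y + (1 - K 1) / 4))"
    unfolding eq by (simp only:)
  then show ?thesis unfolding Amat_def by (simp add: sums_iff)
qed

lemma K1_bounds:
  fixes K :: "nat \<Rightarrow> real"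
  assumes Kpos: "\<And>n. n \<ge> 1 \<Longrightarrow> K n > 0" and Ksum: "(\<lambda>n. K (Suc n)) sums 1"
  shows "K 1 > 0" "K 1 \<le> 1"
proof -
  show "K 1 > 0" using Kpos by simp
  have "(\<Sum>i<1. K (Suc i)) \<le> (\<Sum>i. K (Suc i))"
    by (intro sum_le_suminf) (use Ksum Kpos in \<open>auto simp: sums_iff less_imp_le\<close>)
  then show "K 1 \<le> 1" using Ksum by (simp add: sums_iff)
qed

lemma pf_part:
  fixes K :: "nat \<Rightarrow> real" and a0 a1 \<beta> :: real
  assumes Kpos: "\<And>n. n \<ge> 1 \<Longrightarrow> K n > 0" and Ksum: "(\<lambda>n. K (Suc n)) sums 1"
  defines "lam \<equiv> K 1 * cosh (\<beta> * (a0 + a1)) + (1 - K 1) * (cosh (\<beta> * a0) * cosh (\<beta> * a1))"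
  shows "pf_eigenvalue (Amat K a0 a1 \<beta> 0) lam"
proof -
  define k where "k = K 1"
  have k: "0 < k" "k \<le> 1" using K1_bounds[OF Kpos Ksum] by (auto simp: k_def)
  define A where "A = Amat K a0 a1 \<beta> 0"
  define w1 where "w1 = exp (\<beta> * (- a0 - a1))"
  define w2 where "w2 = exp (\<beta> * (a0 - a1))"
  define w3 where "w3 = exp (\<beta> * (a1 - a0))"
  define w4 where "w4 = exp (\<beta> * (a0 + a1))"
  define a where "a = k / 2 + (1 - k) / 4"
  define b where "b = (1 - k) / 4"
  define X1 where "X1 = w1 * a + w3 * b"
  define Y1 where "Y1 = w2 * a + w4 * b"
  define X2 where "X2 = w1 * b + w3 * a"
  define Y2 where "Y2 = w2 * b + w4 * a"
  have wpos: "w1 > 0" "w2 > 0" "w3 > 0" "w4 > 0" by (simp_all add: w1_def w2_def w3_def w4_def)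
  have ab: "a > 0" "b \<ge> 0" using k by (simp_all add: a_def b_def field_simps)
  have Y1pos: "Y1 > 0" unfolding Y1_def using wpos ab by (simp add: add_pos_nonneg)
  have Am: "A x y = exp (\<beta> * fobs a0 a1 y) * (if fst y = snd x then a else b)"
    if "x \<in> Sig" "y \<in> Sig" for x y
    unfolding A_def Aval[OF Ksum that] by (simp add: Qm_def a_def b_def k_def)
  have row: "(\<Sum>y\<in>Sig. complex_of_real (A x y) * v y) =
     (if snd x = -1 then of_real (w1 * a) * v (-1,-1) + of_real (w2 * a) * v (-1,1)
                        + of_real (w3 * b) * v (1,-1) + of_real (w4 * b) * v (1,1)
      else of_real (w1 * b) * v (-1,-1) + of_real (w2 * b) * v (-1,1)
                        + of_real (w3 * a) * v (1,-1) + of_real (w4 * a) * v (1,1))"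
    if x: "x \<in> Sig" for x and v :: "int \<times> int \<Rightarrow> complex"
  proof -
    have sx: "snd x = -1 \<or> snd x = 1" using x by (auto simp: Sig_def)
    have f: "fobs a0 a1 (-1,-1) = - a0 - a1" "fobs a0 a1 (-1,1) = a0 - a1"
      "fobs a0 a1 (1,-1) = a1 - a0" "fobs a0 a1 (1,1) = a0 + a1" by (simp_all add: fobs_def)
    have S: "(-1,-1) \<in> Sig" "(-1,1) \<in> Sig" "(1,-1) \<in> Sig" "(1,1) \<in> Sig" by (simp_all add: Sig_def)
    show ?thesis unfolding sum_Sig using sx
      by (auto simp: Am[OF x S(1)] Am[OF x S(2)] Am[OF x S(3)] Am[OF x S(4)] f w1_def w2_def w3_def w4_def)
  qed
  have det: "X1 * Y2 = X2 * Y1"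
  proof -
    have "w1 * w4 = 1" "w2 * w3 = 1"
      by (simp_all add: w1_def w2_def w3_def w4_def exp_add[symmetric] algebra_simps)
    then show ?thesis unfolding X1_def Y1_def X2_def Y2_def by algebra
  qed
  have trace: "X1 + Y2 = lam"
  proof -
    have c1: "cosh (\<beta> * (a0 + a1)) = (w1 + w4) / 2"
      by (simp add: cosh_def w1_def w4_def algebra_simps)
    have c2: "cosh (\<beta> * a0) * cosh (\<beta> * a1) = (w1 + w2 + w3 + w4) / 4"
      by (simp add: cosh_def w1_def w2_def w3_def w4_def field_simps exp_add[symmetric] exp_diff algebra_simps)
    show ?thesis unfolding lam_def k_def[symmetric] c1 c2 X1_def Y2_def a_def b_def
      by (simp add: field_simps)
  qed
  have lpos: "lam > 0" unfolding lam_def k_def[symmetric]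
    using k by (intro add_pos_nonneg mult_pos_pos mult_nonneg_nonneg) auto
  have eig: "is_eigenvalue A (complex_of_real lam)"
    unfolding is_eigenvalue_def
  proof (intro exI conjI)
    let ?v = "\<lambda>y::int\<times>int. complex_of_real (if snd y = -1 then Y1 else Y2)"
    show "\<exists>x\<in>Sig. ?v x \<noteq> 0" using Y1pos by (intro bexI[of _ "(-1,-1)"]) (auto simp: Sig_def)
    show "\<forall>x\<in>Sig. (\<Sum>y\<in>Sig. complex_of_real (A x y) * ?v y) = complex_of_real lam * ?v x"
    proof
      fix x assume x: "x \<in> Sig"
      have "w1 * a * Y1 + w2 * a * Y2 + w3 * b * Y1 + w4 * b * Y2 = X1 * Y1 + Y1 * Y2"
        by (simp add: X1_def Y1_def algebra_simps)
      also have "\<dots> = lam * Y1" by (simp add: trace[symmetric] algebra_simps)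
      finally have e1: "w1 * a * Y1 + w2 * a * Y2 + w3 * b * Y1 + w4 * b * Y2 = lam * Y1" .
      have "w1 * b * Y1 + w2 * b * Y2 + w3 * a * Y1 + w4 * a * Y2 = X2 * Y1 + Y2 * Y2"
        by (simp add: X2_def Y2_def algebra_simps)
      also have "\<dots> = X1 * Y2 + Y2 * Y2" using det by simp
      also have "\<dots> = lam * Y2" by (simp add: trace[symmetric] algebra_simps)
      finally have e2: "w1 * b * Y1 + w2 * b * Y2 + w3 * a * Y1 + w4 * a * Y2 = lam * Y2" .
      have sx: "snd x = -1 \<or> snd x = 1" using x by (auto simp: Sig_def)
      show "(\<Sum>y\<in>Sig. complex_of_real (A x y) * ?v y) = complex_of_real lam * ?v x"
        using sx
      proof
        assume "snd x = -1"
        then show ?thesis using arg_cong[OF e1, of complex_of_real] row[OF x, of ?v] by simp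
      next
        assume "snd x = 1"
        then show ?thesis using arg_cong[OF e2, of complex_of_real] row[OF x, of ?v] by simp
      qed
    qed
  qed
  have bound: "cmod \<mu> \<le> lam" if "is_eigenvalue A \<mu>" for \<mu>
  proof (cases "\<mu> = 0")
    case True then show ?thesis using lpos by simp
  next
    case False
    from that obtain v where nz: "\<exists>x\<in>Sig. v x \<noteq> 0"
      and ev: "\<forall>x\<in>Sig. (\<Sum>y\<in>Sig. complex_of_real (A x y) * v y) = \<mu> * v x"
      unfolding is_eigenvalue_def by blast
    have S: "(-1,-1) \<in> Sig" "(-1,1) \<in> Sig" "(1,-1) \<in> Sig" "(1,1) \<in> Sig" by (simp_all add: Sig_def)
    have r1: "\<mu> * v (-1,-1) = of_real (w1 * a) * v (-1,-1) + of_real (w2 * a) * v (-1,1)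
                        + of_real (w3 * b) * v (1,-1) + of_real (w4 * b) * v (1,1)"
      using ev S(1) row[OF S(1), of v] by simp
    have r3: "\<mu> * v (1,-1) = of_real (w1 * a) * v (-1,-1) + of_real (w2 * a) * v (-1,1)
                        + of_real (w3 * b) * v (1,-1) + of_real (w4 * b) * v (1,1)"
      using ev S(3) row[OF S(3), of v] by simp
    have r2: "\<mu> * v (-1,1) = of_real (w1 * b) * v (-1,-1) + of_real (w2 * b) * v (-1,1)
                        + of_real (w3 * a) * v (1,-1) + of_real (w4 * a) * v (1,1)"
      using ev S(2) row[OF S(2), of v] by simp
    have r4: "\<mu> * v (1,1) = of_real (w1 * b) * v (-1,-1) + of_real (w2 * b) * v (-1,1)
                        + of_real (w3 * a) * v (1,-1) + of_real (w4 * a) * v (1,1)"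
      using ev S(4) row[OF S(4), of v] by simp
    have "\<mu> * v (1,-1) = \<mu> * v (-1,-1)" using r1 r3 by (simp only:)
    then have v31: "v (1,-1) = v (-1,-1)" using False by (metis mult_left_cancel)
    have "\<mu> * v (1,1) = \<mu> * v (-1,1)" using r2 r4 by (simp only:)
    then have v42: "v (1,1) = v (-1,1)" using False by (metis mult_left_cancel)
    define v1 where "v1 = v (-1,-1)"
    define v2 where "v2 = v (-1,1)"
    have E1: "\<mu> * v1 = of_real X1 * v1 + of_real Y1 * v2"
      using r1 unfolding v31 v42 v1_def[symmetric] v2_def[symmetric] X1_def Y1_def
      by (simp add: algebra_simps)
    have E2: "\<mu> * v2 = of_real X2 * v1 + of_real Y2 * v2"
      using r2 unfolding v31 v42 v1_def[symmetric] v2_def[symmetric] X2_def Y2_def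
      by (simp add: algebra_simps)
    have cdet: "complex_of_real X1 * of_real Y2 = of_real X2 * of_real Y1"
      using arg_cong[OF det, of complex_of_real] by simp
    have ctr: "complex_of_real lam = of_real X1 + of_real Y2"
      using arg_cong[OF trace, of complex_of_real] by simp
    have z1: "\<mu> * (\<mu> - of_real lam) * v1 = 0"
      unfolding ctr using E1 E2 cdet by algebra
    have z2: "\<mu> * (\<mu> - of_real lam) * v2 = 0"
      unfolding ctr using E1 E2 cdet by algebra
    show ?thesis
    proof (cases "\<mu> = of_real lam")
      case True then show ?thesis using lpos by simp
    next
      case F2: False
      then have "v1 = 0" "v2 = 0" using z1 z2 False by auto
      then have "\<forall>x\<in>Sig. v x = 0" using v31 v42 by (auto simp: Sig_def v1_def v2_def)
      then show ?thesis using nz by blast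
    qed
  qed
  show ?thesis unfolding pf_eigenvalue_def A_def[symmetric] using eig bound by blast
qed


theorem mainTheorem2:
  fixes K :: "nat \<Rightarrow> real" and a0 a1 \<beta> :: real
  assumes Kpos: "\<And>n. n \<ge> 1 \<Longrightarrow> K n > 0"
    and Ksum: "(\<lambda>n. K (Suc n)) sums 1"
  shows "pf_eigenvalue (Amat K a0 a1 \<beta> 0)
           (cosh (a0 * \<beta>) * cosh (a1 * \<beta>) *
              (1 + K 1 * (cosh ((a0 + a1) * \<beta>) / (cosh (a0 * \<beta>) * cosh (a1 * \<beta>)) - 1)))
       \<and> hca K a0 a1 \<beta> = - ln (cosh (a0 * \<beta>) * cosh (a1 * \<beta>) *
              (1 + K 1 * (cosh ((a0 + a1) * \<beta>) / (cosh (a0 * \<beta>) * cosh (a1 * \<beta>)) - 1)))"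
proof -
  have c0: "cosh (a0 * \<beta>) > 0" "cosh (a1 * \<beta>) > 0" by simp_all
  have E: "cosh (a0 * \<beta>) * cosh (a1 * \<beta>) *
              (1 + K 1 * (cosh ((a0 + a1) * \<beta>) / (cosh (a0 * \<beta>) * cosh (a1 * \<beta>)) - 1))
      = K 1 * cosh (\<beta> * (a0 + a1)) + (1 - K 1) * (cosh (\<beta> * a0) * cosh (\<beta> * a1))"
    using c0 by (simp add: field_simps mult.commute)
  show ?thesis unfolding E using pf_part[OF Kpos Ksum] hca_value(2)[OF Kpos Ksum] by simp
qed

end
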